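(* Let $G$ be a locally compact second countable group acting measurably and preserving the probability measure $\nu$ on a standard Borel space $(X,\mathcal B,\nu)$, let $1\le p\le\infty$, and suppose $\{G_t\}_{t>0}$ is a quasi-uniform family whose Haar-uniform averages $\beta_t$ satisfy the pointwise ergodic theorem in $L^p(\nu)$. Then for every $f\in L^p(\nu)$ there exists a $G$-invariant measurable set $\Omega(f)$ of full measure such that for every $x\in\Omega(f)$, $\lim_{t\to\infty}\pi(\beta_t)f(x)=\int_Xf\,d\nu$. In particular this holds for admissible one-parameter families and admissible sequences on $S$-algebraic groups (satisfying the pointwise ergodic theorem in $L^p(\nu)$).
   Context: $m_G$ is a left Haar measure, $\beta_t=m_G|_{G_t}/m_G(G_t)$, $\pi(\beta_t)f(x)=\frac1{m_G(G_t)}\int_{G_t}f(g^{-1}x)dm_G(g)$. An increasing family of bounded Borel sets $\{G_t\}_{t>0}$ of positive measure is quasi-uniform if (i) for every $\varepsilon>0$ there is a neighborhood $\mathcal O$ of $e$ with $\mathcal O G_t\subset G_{t+\varepsilon}$ for all sufficiently large $t$, and (ii) for every $\delta>0$ there is $\varepsilon>0$ with $m_G(G_{t+\varepsilon})\le(1+\delta)m_G(G_t)$ for all sufficiently large $t$. $\beta_t$ satisfies the pointwise ergodic theorem in $L^p(\nu)$ if $\pi(\beta_t)f(x)\to\int f\,d\nu$ for $\nu$-a.e. $x$ for every $f\in L^p(\nu)$. $S$-algebraic groups and admissibility: $G$ a finite product of groups $\mathbf G_i(F_i)$ ($F_i$ locally compact non-discrete fields, $\mathbf G_i$ algebraically connected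 semisimple of positive $F_i$-rank, no $F_i$-anisotropic factors, $G_i^+$ of finite index), $\mathcal O_\varepsilon=\mathcal U_\varepsilon\times K_0$ ($\mathcal U_\varepsilon$ Riemannian balls of the Archimedean part, $K_0$ compact open in the non-Archimedean part); a one-parameter family is admissible if it is coarsely admissible (for every bounded $B$, $BG_tB\subset G_{t+c_B}$ for large $t$; for every $c$, $m_G(G_{t+c})\le d\,m_G(G_t)$ for large $t$) and for some $c,t_0,\varepsilon_0$: $\mathcal O_\varepsilon G_t\mathcal O_\varepsilon\subset G_{t+c\varepsilon}$, $m_G(G_{t+\varepsilon})\le(1+c\varepsilon)m_G(G_t)$ for $t\ge t_0$, $\varepsilon\le\varepsilon_0$; an admissible sequence ($t\in\mathbb N$, totally disconnected $G$) is coarsely admissible with $K_0G_tK_0=G_t$ for large $t$. *)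

theory Defs
  imports "HOL-Analysis.Analysis" "HOL-Probability.Probability"
begin

text \<open>The group G is written additively (class group_add is NOT assumed commutative).
  Left Haar measure: a Borel measure, left-invariant, finite on compact sets and
  positive on nonempty open sets.\<close>
definition left_haar_measure :: "('g::{topological_group_add}) measure \<Rightarrow> bool" where
  "left_haar_measure m \<longleftrightarrow>
     sets m = sets borel \<and>
     (\<forall>g A. A \<in> sets borel \<longrightarrow> emeasure m ((\<lambda>y. g + y) ` A) = emeasure m A) \<and>
     (\<forall>K. compact K \<longrightarrow> emeasure m K < \<infinity>) \<and>
     (\<forall>U. open U \<and> U \<noteq> {} \<longrightarrow> emeasure m U > 0)"

definition mp_action :: "('g::topological_group_add \<Rightarrow> 'x \<Rightarrow> 'x) \<Rightarrow> 'x measure \<Rightarrow> bool" where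
  "mp_action act M \<longleftrightarrow>
     (\<forall>x \<in> space M. act 0 x = x) \<and>
     (\<forall>g h. \<forall>x \<in> space M. act (g + h) x = act g (act h x)) \<and>
     (\<lambda>(g, x). act g x) \<in> measurable (borel \<Otimes>\<^sub>M M) M \<and>
     (\<forall>g. distr M M (act g) = M)"

definition memLp :: "'x measure \<Rightarrow> ennreal \<Rightarrow> ('x \<Rightarrow> real) \<Rightarrow> bool" where
  "memLp M p f \<longleftrightarrow> f \<in> borel_measurable M \<and>
     (if p = \<infinity> then (\<exists>C. AE x in M. \<bar>f x\<bar> \<le> C)
      else (\<integral>\<^sup>+ x. ennreal (\<bar>f x\<bar> powr enn2real p) \<partial>M) < \<infinity>)"

definition haar_avg :: "'g::topological_group_add measure \<Rightarrow> 'g set \<Rightarrow> ('g \<Rightarrow> 'x \<Rightarrow> 'x)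
    \<Rightarrow> ('x \<Rightarrow> real) \<Rightarrow> 'x \<Rightarrow> real" where
  "haar_avg m B act f x = (1 / measure m B) * (LINT g:B|m. f (act (- g) x))"

definition quasi_uniform :: "'g::topological_group_add measure \<Rightarrow> (real \<Rightarrow> 'g set) \<Rightarrow> bool" where
  "quasi_uniform m Gt \<longleftrightarrow>
     (\<forall>s t. 0 < s \<and> s \<le> t \<longrightarrow> Gt s \<subseteq> Gt t) \<and>
     (\<forall>t>0. Gt t \<in> sets borel \<and> compact (closure (Gt t)) \<and> emeasure m (Gt t) > 0) \<and>
     (\<forall>\<epsilon>>0. \<exists>U. open U \<and> 0 \<in> U \<and>
        (\<forall>\<^sub>F t in at_top. {u + y | u y. u \<in> U \<and> y \<in> Gt t} \<subseteq> Gt (t + \<epsilon>))) \<and>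
     (\<forall>\<delta>>0. \<exists>\<epsilon>>0. \<forall>\<^sub>F t in at_top.
        emeasure m (Gt (t + \<epsilon>)) \<le> (1 + ennreal \<delta>) * emeasure m (Gt t))"

definition pointwise_ergodic :: "'g::topological_group_add measure \<Rightarrow> (real \<Rightarrow> 'g set)
    \<Rightarrow> ('g \<Rightarrow> 'x \<Rightarrow> 'x) \<Rightarrow> 'x measure \<Rightarrow> ennreal \<Rightarrow> bool" where
  "pointwise_ergodic m Gt act M p \<longleftrightarrow>
     (\<forall>f. memLp M p f \<longrightarrow>
        (AE x in M. ((\<lambda>t. haar_avg m (Gt t) act f x) \<longlongrightarrow> (\<integral>y. f y \<partial>M)) at_top))"

end

theory Submission
  imports Defs
begin
lemma haar_sigma_finite:
  fixes m :: "('g::{topological_group_add, second_countable_topology, t2_space}) measure"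
  assumes lc: "locally_compact_space (euclidean :: 'g topology)"
    and haar: "left_haar_measure m"
  shows "sigma_finite_measure m"
proof
  have sm: "sets m = sets borel" and fin: "\<And>K. compact K \<Longrightarrow> emeasure m K < \<infinity>"
    using haar by (auto simp: left_haar_measure_def)
  obtain B :: "'g set set" where B: "countable B" "topological_basis B"
    using ex_countable_basis by blast
  define A where "A = {b \<in> B. \<exists>K. compact K \<and> b \<subseteq> K}"
  have "countable A" using B(1) unfolding A_def by simp
  moreover have "A \<subseteq> sets m"
    using B(2) unfolding A_def sm by (auto simp: topological_basis_def)
  moreover have "\<Union>A = space m"
  proof -
    have "x \<in> \<Union>A" for x
    proof -
      have "\<exists>U. open U \<and> (\<exists>K. compact K \<and> x \<in> U \<and> U \<subseteq> K)"
        using lc unfolding locally_compact_space_def by auto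
      then obtain U K where "open U" "compact K" "x \<in> U" "U \<subseteq> K"
        by blast
      then obtain b where "b \<in> B" "x \<in> b" "b \<subseteq> U"
        using topological_basisE[OF B(2)] by metis
      then show ?thesis unfolding A_def using \<open>compact K\<close> \<open>U \<subseteq> K\<close> by blast
    qed
    moreover have "space m = UNIV" using sets_eq_imp_space_eq[OF sm] by simp
    ultimately show ?thesis by auto
  qed
  moreover have "\<forall>a\<in>A. emeasure m a \<noteq> \<infinity>"
  proof
    fix a assume "a \<in> A"
    then obtain K where K: "compact K" "a \<subseteq> K" and "open a"
      using B(2) unfolding A_def topological_basis_def by auto
    have "emeasure m a \<le> emeasure m K"
      by (rule emeasure_mono) (use K compact_imp_closed borel_closed in \<open>auto simp: sm\<close>)
    then show "emeasure m a \<noteq> \<infinity>" using fin[OF K(1)] by (auto simp: top_unique)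
  qed
  ultimately show "\<exists>A. countable A \<and> A \<subseteq> sets m \<and> \<Union> A = space m \<and> (\<forall>a\<in>A. emeasure m a \<noteq> \<infinity>)"
    by blast
qed

definition nnI :: "('g::uminus) measure \<Rightarrow> ('g \<Rightarrow> 'x \<Rightarrow> 'x) \<Rightarrow> ('x \<Rightarrow> real) \<Rightarrow> 'g set \<Rightarrow> 'x \<Rightarrow> ennreal"
  where "nnI m act F B x = (\<integral>\<^sup>+ u. indicator B u * ennreal (F (act (- u) x)) \<partial>m)"

context
  fixes m :: "('g::{topological_group_add, second_countable_topology, t2_space}) measure"
    and M :: "('x::polish_space) measure"
    and act :: "'g \<Rightarrow> 'x \<Rightarrow> 'x"
    and Gt :: "real \<Rightarrow> 'g set"
    and p :: ennreal
  assumes lc: "locally_compact_space (euclidean :: 'g topology)"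
    and haar: "left_haar_measure m"
    and prob: "prob_space M"
    and sets_M: "sets M = sets borel"
    and action: "mp_action act M"
    and p: "1 \<le> p"
    and qu: "quasi_uniform m Gt"
    and pet: "pointwise_ergodic m Gt act M p"
begin

lemma sm: "sets m = sets borel" using haar by (simp add: left_haar_measure_def)
lemma space_m[simp]: "space m = UNIV" using sets_eq_imp_space_eq[OF sm] by simp
lemma space_M[simp]: "space M = UNIV" using sets_eq_imp_space_eq[OF sets_M] by simp
lemma sf: "sigma_finite_measure m" by (rule haar_sigma_finite[OF lc haar])
lemma psf: "pair_sigma_finite M m"
  unfolding pair_sigma_finite_def using sf prob_space_imp_sigma_finite[OF prob] by blast

lemma act0: "act 0 x = x" using action by (simp add: mp_action_def)
lemma act_add: "act (g + h) x = act g (act h x)" using action by (simp add: mp_action_def)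
lemma act_distr: "distr M M (act g) = M" using action by (simp add: mp_action_def)
lemma act_joint: "(\<lambda>(g, x). act g x) \<in> measurable (borel \<Otimes>\<^sub>M M) M"
  using action by (simp add: mp_action_def)

lemma meas_pair: "(\<lambda>q. act (- snd q) (fst q)) \<in> measurable (M \<Otimes>\<^sub>M m) M"
proof -
  have u: "(uminus :: 'g \<Rightarrow> 'g) \<in> measurable m borel"
    unfolding measurable_cong_sets[OF sm refl]
    by (rule borel_measurable_continuous_onI) (intro continuous_intros)
  have s: "(\<lambda>q. - snd q) \<in> measurable (M \<Otimes>\<^sub>M m) borel"
    using measurable_comp[OF measurable_snd u] unfolding o_def .
  have "(\<lambda>q. (- snd q, fst q)) \<in> measurable (M \<Otimes>\<^sub>M m) (borel \<Otimes>\<^sub>M M)"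
    by (rule measurable_Pair[OF s measurable_fst])
  from measurable_comp[OF this act_joint] show ?thesis unfolding o_def by (simp only: case_prod_conv)
qed

lemma meas_act_neg: "act (- g) \<in> measurable M M"
  using measurable_Pair1[OF meas_pair, of g] by simp

lemma meas_orbit: "(\<lambda>g. act (- g) x) \<in> measurable m M"
  using measurable_Pair2[OF meas_pair, of x] by simp


lemma meas_left: "(\<lambda>v. h + v) \<in> measurable m m"
  unfolding measurable_cong_sets[OF sm sm]
  by (rule borel_measurable_continuous_onI) (intro continuous_intros)

lemma distr_left: "distr m m (\<lambda>v. h + v) = m"
proof (rule measure_eqI)
  fix A assume "A \<in> sets (distr m m (\<lambda>v. h + v))"
  then have A: "A \<in> sets borel" by (simp add: sm)
  have "(\<lambda>v. h + v) -` A \<inter> space m = (\<lambda>y. - h + y) ` A"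
    by (auto simp: image_iff add.assoc[symmetric]) (metis add.assoc add.left_inverse add_0)
  then show "emeasure (distr m m (\<lambda>v. h + v)) A = emeasure m A"
    using haar A by (simp add: emeasure_distr[OF meas_left] sm left_haar_measure_def)
qed simp

lemma meas_integrand:
  fixes F :: "'x \<Rightarrow> real"
  assumes F: "F \<in> borel_measurable M" and B: "B \<in> sets borel"
  shows "(\<lambda>u. indicator B u * ennreal (F (act (- u) x))) \<in> borel_measurable m"
proof -
  have 1: "(\<lambda>u. F (act (- u) x)) \<in> borel_measurable m"
    using measurable_compose[OF meas_orbit F] .
  have 2: "(indicator B :: 'g \<Rightarrow> ennreal) \<in> borel_measurable m"
    using B by (intro borel_measurable_indicator) (simp add: sm)
  show ?thesis
    by (rule borel_measurable_times_ennreal[OF 2 measurable_compose[OF 1 measurable_ennreal]])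
qed

lemma meas_integrand_real:
  fixes F :: "'x \<Rightarrow> real"
  assumes F: "F \<in> borel_measurable M" and B: "B \<in> sets borel"
  shows "(\<lambda>u. indicator B u *\<^sub>R F (act (- u) x)) \<in> borel_measurable m"
proof -
  have 1: "(\<lambda>u. F (act (- u) x)) \<in> borel_measurable m"
    using measurable_compose[OF meas_orbit F] .
  have 2: "(indicator B :: 'g \<Rightarrow> real) \<in> borel_measurable m"
    using B by (intro borel_measurable_indicator) (simp add: sm)
  show ?thesis
    using borel_measurable_scaleR[OF 2 1] by simp
qed

lemma nnI_shift:
  fixes F :: "'x \<Rightarrow> real"
  assumes F: "F \<in> borel_measurable M" and B: "B \<in> sets borel"
  shows "nnI m act F B (act h y) = (\<integral>\<^sup>+ v. indicator B (h + v) * ennreal (F (act (- v) y)) \<partial>m)"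
proof -
  have "nnI m act F B (act h y) = (\<integral>\<^sup>+ u. indicator B u * ennreal (F (act (- u) (act h y))) \<partial>distr m m (\<lambda>v. h + v))"
    by (simp add: nnI_def distr_left)
  also have "\<dots> = (\<integral>\<^sup>+ v. indicator B (h + v) * ennreal (F (act (- (h + v)) (act h y))) \<partial>m)"
    by (rule nn_integral_distr[OF meas_left]) (simp add: distr_left meas_integrand[OF F B])
  also have "\<dots> = (\<integral>\<^sup>+ v. indicator B (h + v) * ennreal (F (act (- v) y)) \<partial>m)"
  proof -
    have "act (- (h + v)) (act h y) = act (- v) y" for v
      by (simp add: act_add[symmetric] minus_add add.assoc)
    then show ?thesis by simp
  qed
  finally show ?thesis .
qed

lemma nnI_mono:
  assumes "B \<subseteq> B'"
  shows "nnI m act F B x \<le> nnI m act F B' x"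
  unfolding nnI_def
  by (rule nn_integral_mono) (use assms in \<open>auto simp: indicator_def\<close>)

lemma avg_eq:
  fixes F :: "'x \<Rightarrow> real"
  assumes F: "F \<in> borel_measurable M" and nn: "\<And>z. 0 \<le> F z" and B: "B \<in> sets borel"
  shows "haar_avg m B act F x = (1 / measure m B) * enn2real (nnI m act F B x)"
proof -
  have "(LINT u:B|m. F (act (- u) x)) = enn2real (\<integral>\<^sup>+ u. ennreal (indicator B u *\<^sub>R F (act (- u) x)) \<partial>m)"
    unfolding set_lebesgue_integral_def
    by (rule integral_eq_nn_integral[OF meas_integrand_real[OF F B]]) (simp add: nn)
  also have "(\<integral>\<^sup>+ u. ennreal (indicator B u *\<^sub>R F (act (- u) x)) \<partial>m) = nnI m act F B x"
    unfolding nnI_def by (rule nn_integral_cong) (simp add: indicator_def)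
  finally show ?thesis by (simp add: haar_avg_def)
qed

lemma G_props:
  assumes "0 < t"
  shows "Gt t \<in> sets borel" "emeasure m (Gt t) < \<infinity>" "0 < measure m (Gt t)"
    "emeasure m (Gt t) = ennreal (measure m (Gt t))"
proof -
  have a: "Gt t \<in> sets borel" "compact (closure (Gt t))" "emeasure m (Gt t) > 0"
    using qu assms by (auto simp: quasi_uniform_def)
  show "Gt t \<in> sets borel" by (fact a(1))
  have "emeasure m (Gt t) \<le> emeasure m (closure (Gt t))"
    by (rule emeasure_mono) (auto simp: sm closure_subset)
  also have "\<dots> < \<infinity>" using haar a(2) by (simp add: left_haar_measure_def)
  finally show fin: "emeasure m (Gt t) < \<infinity>" .
  then show eq: "emeasure m (Gt t) = ennreal (measure m (Gt t))"
    by (intro emeasure_eq_ennreal_measure) simp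
  show "0 < measure m (Gt t)" using a(3) eq by simp
qed


lemma fin_AE:
  fixes F :: "'x \<Rightarrow> real"
  assumes F: "F \<in> borel_measurable M" and nn: "\<And>z. 0 \<le> F z" and int: "integrable M F"
    and B: "B \<in> sets borel" and Bfin: "emeasure m B < \<infinity>"
  shows "AE y in M. nnI m act F B y \<noteq> \<infinity>"
proof -
  interpret P: pair_sigma_finite M m by (rule psf)
  have 1: "(\<lambda>q. F (act (- snd q) (fst q))) \<in> borel_measurable (M \<Otimes>\<^sub>M m)"
    using measurable_compose[OF meas_pair F] .
  have 2: "(\<lambda>q. indicator B (snd q) :: ennreal) \<in> borel_measurable (M \<Otimes>\<^sub>M m)"
    using measurable_compose[OF measurable_snd borel_measurable_indicator[of B m]] B
    by (simp add: sm)
  have jm: "(\<lambda>q. indicator B (snd q) * ennreal (F (act (- snd q) (fst q)))) \<in> borel_measurable (M \<Otimes>\<^sub>M m)"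
    by (rule borel_measurable_times_ennreal[OF 2 measurable_compose[OF 1 measurable_ennreal]])
  then have jm': "case_prod (\<lambda>y u. indicator B u * ennreal (F (act (- u) y))) \<in> borel_measurable (M \<Otimes>\<^sub>M m)"
    by (simp add: split_beta')
  have "(\<integral>\<^sup>+ y. nnI m act F B y \<partial>M) = (\<integral>\<^sup>+ u. (\<integral>\<^sup>+ y. indicator B u * ennreal (F (act (- u) y)) \<partial>M) \<partial>m)"
    unfolding nnI_def using P.Fubini'[OF jm'] by simp
  also have "\<dots> = (\<integral>\<^sup>+ u. indicator B u * (\<integral>\<^sup>+ y. ennreal (F y) \<partial>M) \<partial>m)"
  proof (rule nn_integral_cong)
    fix u
    have "(\<integral>\<^sup>+ y. indicator B u * ennreal (F (act (- u) y)) \<partial>M) = indicator B u * (\<integral>\<^sup>+ y. ennreal (F (act (- u) y)) \<partial>M)"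
      by (rule nn_integral_cmult) (rule measurable_compose[OF measurable_compose[OF meas_act_neg F] measurable_ennreal])
    also have "(\<integral>\<^sup>+ y. ennreal (F (act (- u) y)) \<partial>M) = (\<integral>\<^sup>+ y. ennreal (F y) \<partial>distr M M (act (- u)))"
      by (rule nn_integral_distr[OF meas_act_neg, symmetric])
         (simp add: act_distr measurable_compose[OF F measurable_ennreal])
    finally show "(\<integral>\<^sup>+ y. indicator B u * ennreal (F (act (- u) y)) \<partial>M) = indicator B u * (\<integral>\<^sup>+ y. ennreal (F y) \<partial>M)"
      by (simp add: act_distr)
  qed
  also have "\<dots> = (\<integral>\<^sup>+ y. ennreal (F y) \<partial>M) * emeasure m B"
    using nn_integral_cmult_indicator[of B m "\<integral>\<^sup>+ y. ennreal (F y) \<partial>M"] B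
    by (simp add: sm mult.commute)
  also have "\<dots> < \<infinity>"
  proof -
    have "(\<integral>\<^sup>+ y. ennreal (F y) \<partial>M) < \<infinity>"
      using integrableD(2)[OF int] nn by (simp add: abs_of_nonneg less_top)
    then show ?thesis using Bfin by (simp add: ennreal_mult_less_top)
  qed
  finally have "(\<integral>\<^sup>+ y. nnI m act F B y \<partial>M) \<noteq> \<infinity>" by simp
  moreover have "(\<lambda>y. nnI m act F B y) \<in> borel_measurable M"
    unfolding nnI_def by (rule sigma_finite_measure.borel_measurable_nn_integral[OF sf jm'])
  ultimately show ?thesis using nn_integral_PInf_AE by blast
qed

lemma omega_exists:
  assumes N: "N \<in> sets M" "emeasure M N = 0"
  shows "\<exists>\<Omega>\<in>sets M. emeasure M \<Omega> = 1 \<and> (\<forall>g x. act g x \<in> \<Omega> \<longleftrightarrow> x \<in> \<Omega>) \<and>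
           (\<forall>x\<in>\<Omega>. \<forall>V::'g set. open V \<and> 0 \<in> V \<longrightarrow> (\<exists>h\<in>V. act (- h) x \<notin> N))"
proof -
  interpret P: pair_sigma_finite M m by (rule psf)
  interpret Pr: prob_space M by (rule prob)
  define Q where "Q = (\<lambda>q. act (- snd q) (fst q)) -` N \<inter> space (M \<Otimes>\<^sub>M m)"
  have Q: "Q \<in> sets (M \<Otimes>\<^sub>M m)" unfolding Q_def by (rule measurable_sets[OF meas_pair N(1)])
  have sec: "Pair x -` Q = {g. act (- g) x \<in> N}" for x
    by (auto simp: Q_def space_pair_measure)
  have sec2: "(\<lambda>x. (x, g)) -` Q = act (- g) -` N \<inter> space M" for g
    by (auto simp: Q_def space_pair_measure)
  define \<Omega> where "\<Omega> = {x \<in> space M. emeasure m (Pair x -` Q) = 0}"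
  have mf: "(\<lambda>x. emeasure m (Pair x -` Q)) \<in> borel_measurable M"
    by (rule sigma_finite_measure.measurable_emeasure_Pair[OF sf Q])
  have "\<Omega> = (\<lambda>x. emeasure m (Pair x -` Q)) -` {0} \<inter> space M" unfolding \<Omega>_def by auto
  then have \<Omega>_sets: "\<Omega> \<in> sets M" using measurable_sets[OF mf, of "{0}"] by simp
  have "emeasure (M \<Otimes>\<^sub>M m) Q = (\<integral>\<^sup>+ g. emeasure M ((\<lambda>x. (x, g)) -` Q) \<partial>m)"
    by (rule P.emeasure_pair_measure_alt2[OF Q])
  also have "\<dots> = (\<integral>\<^sup>+ g. 0 \<partial>m)"
  proof (rule nn_integral_cong)
    fix g
    have "emeasure M ((\<lambda>x. (x, g)) -` Q) = emeasure (distr M M (act (- g))) N"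
      by (simp add: sec2 emeasure_distr[OF meas_act_neg N(1)])
    then show "emeasure M ((\<lambda>x. (x, g)) -` Q) = 0" by (simp add: act_distr N(2))
  qed
  finally have "emeasure (M \<Otimes>\<^sub>M m) Q = 0" by simp
  then have "(\<integral>\<^sup>+ x. emeasure m (Pair x -` Q) \<partial>M) = 0"
    using sigma_finite_measure.emeasure_pair_measure_alt[OF sf Q] by simp
  then have "AE x in M. emeasure m (Pair x -` Q) = 0"
    using nn_integral_0_iff_AE[OF mf] by simp
  then have "AE x in M. x \<in> \<Omega>" unfolding \<Omega>_def by simp
  then have m1: "emeasure M \<Omega> = 1" using Pr.emeasure_eq_1_AE[OF \<Omega>_sets] by simp
  have inv: "emeasure m (Pair (act h x) -` Q) = emeasure m (Pair x -` Q)" for h x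
  proof -
    have "Pair (act h x) -` Q = (\<lambda>u. h + u) ` (Pair x -` Q)"
    proof -
      have e: "act (- g) (act h x) = act (- (- h + g)) x" for g
        by (simp add: act_add[symmetric] minus_add)
      show ?thesis unfolding sec
        by (auto simp: e image_iff) (metis add.assoc add.right_inverse add_0)
    qed
    moreover have "Pair x -` Q \<in> sets borel" using sets_Pair1[OF Q] by (simp add: sm)
    ultimately show ?thesis using haar by (simp add: left_haar_measure_def)
  qed
  have inv2: "\<forall>g x. act g x \<in> \<Omega> \<longleftrightarrow> x \<in> \<Omega>" unfolding \<Omega>_def using inv by simp
  have near: "\<forall>x\<in>\<Omega>. \<forall>V::'g set. open V \<and> 0 \<in> V \<longrightarrow> (\<exists>h\<in>V. act (- h) x \<notin> N)"
  proof (intro ballI allI impI)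
    fix x and V :: "'g set" assume x: "x \<in> \<Omega>" and V: "open V \<and> 0 \<in> V"
    show "\<exists>h\<in>V. act (- h) x \<notin> N"
    proof (rule ccontr)
      assume "\<not> ?thesis"
      then have "V \<subseteq> Pair x -` Q" unfolding sec by auto
      then have "emeasure m V \<le> emeasure m (Pair x -` Q)"
        by (intro emeasure_mono) (use sets_Pair1[OF Q] in auto)
      also have "\<dots> = 0" using x unfolding \<Omega>_def by simp
      finally have "emeasure m V = 0" by simp
      moreover have "emeasure m V > 0" using haar V by (auto simp: left_haar_measure_def)
      ultimately show False by simp
    qed
  qed
  show ?thesis using \<Omega>_sets m1 inv2 near by blast
qed


lemma div_band:
  fixes x \<mu> c e :: real
  assumes "0 < \<mu>"
  shows "\<bar>x / \<mu> - c\<bar> < e \<longleftrightarrow> (c - e) * \<mu> < x \<and> x < (c + e) * \<mu>"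
proof -
  have 1: "x / \<mu> < c + e \<longleftrightarrow> x < (c + e) * \<mu>" by (simp add: pos_divide_less_eq assms)
  have 2: "c - e < x / \<mu> \<longleftrightarrow> (c - e) * \<mu> < x" by (simp add: pos_less_divide_eq assms)
  show ?thesis unfolding abs_less_iff using 1 2 by linarith
qed

lemma sandwich_real:
  fixes a b \<mu> :: "real \<Rightarrow> real"
  assumes lim: "((\<lambda>t. a t / \<mu> t) \<longlongrightarrow> c) at_top" and c: "0 \<le> c" and e: "0 < e"
    and \<delta>: "0 < \<delta>" "\<delta> * (c + e) \<le> e / 2" and \<epsilon>: "0 < \<epsilon>"
    and H1: "\<forall>\<^sub>F t in at_top. b t \<le> a (t + \<epsilon>)"
    and H2: "\<forall>\<^sub>F t in at_top. a t \<le> b (t + \<epsilon>)"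
    and H3: "\<forall>\<^sub>F t in at_top. \<mu> (t + \<epsilon>) \<le> (1 + \<delta>) * \<mu> t"
    and pos: "\<forall>\<^sub>F t in at_top. 0 < \<mu> t"
    and anz: "\<And>t. 0 \<le> a t"
  shows "\<forall>\<^sub>F t in at_top. \<bar>b t / \<mu> t - c\<bar> < e"
proof -
  have e2: "0 < e / 2" using e by simp
  have L: "\<forall>\<^sub>F t in at_top. \<bar>a t / \<mu> t - c\<bar> < e / 2"
    using lim e2 unfolding tendsto_iff dist_real_def by blast
  have "\<forall>\<^sub>F t in at_top. \<bar>a t / \<mu> t - c\<bar> < e / 2 \<and> b t \<le> a (t + \<epsilon>) \<and> a t \<le> b (t + \<epsilon>)
      \<and> \<mu> (t + \<epsilon>) \<le> (1 + \<delta>) * \<mu> t \<and> 0 < \<mu> t"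
    by (rule eventually_conj[OF L eventually_conj[OF H1 eventually_conj[OF H2 eventually_conj[OF H3 pos]]]])
  then obtain N where N: "\<And>t. t \<ge> N \<Longrightarrow> \<bar>a t / \<mu> t - c\<bar> < e / 2 \<and> b t \<le> a (t + \<epsilon>) \<and> a t \<le> b (t + \<epsilon>)
      \<and> \<mu> (t + \<epsilon>) \<le> (1 + \<delta>) * \<mu> t \<and> 0 < \<mu> t"
    unfolding eventually_at_top_linorder by blast
  show ?thesis
    unfolding eventually_at_top_linorder
  proof (intro exI allI impI)
    fix t assume t: "N + \<epsilon> \<le> t"
    define s where "s = t - \<epsilon>"
    have ts: "t = s + \<epsilon>" unfolding s_def by simp
    have Nt: "N \<le> t" "N \<le> s" "N \<le> t + \<epsilon>" using t \<epsilon> unfolding s_def by auto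
    note At = N[OF Nt(1)] and As = N[OF Nt(2)] and Ate = N[OF Nt(3)]
    have mt: "0 < \<mu> t" and ms: "0 < \<mu> s" and mte: "0 < \<mu> (t + \<epsilon>)" using At As Ate by auto
    have up1: "a (t + \<epsilon>) < (c + e / 2) * \<mu> (t + \<epsilon>)"
      using Ate div_band[OF mte] by blast
    have up2: "\<mu> (t + \<epsilon>) \<le> (1 + \<delta>) * \<mu> t" using At by blast
    have "(c + e / 2) * \<mu> (t + \<epsilon>) \<le> (c + e / 2) * ((1 + \<delta>) * \<mu> t)"
      using up2 c e by (intro mult_left_mono) auto
    also have "\<dots> = (c + e / 2 + \<delta> * (c + e / 2)) * \<mu> t" by (simp add: algebra_simps)
    also have "\<dots> < (c + e) * \<mu> t"
    proof -
      have "\<delta> * (c + e / 2) < \<delta> * (c + e)" using \<delta> e by simp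
      then have "c + e / 2 + \<delta> * (c + e / 2) < c + e" using \<delta> by linarith
      then show ?thesis using mt by simp
    qed
    finally have upper: "b t < (c + e) * \<mu> t" using up1 At by linarith
    have lower: "(c - e) * \<mu> t < b t"
    proof (cases "c \<le> e / 2")
      case True
      then have "(c - e) * \<mu> t < 0" using mt e by (simp add: mult_neg_pos)
      also have "0 \<le> a s" by (rule anz)
      also have "a s \<le> b t" using As ts by blast
      finally show ?thesis .
    next
      case False
      have lo1: "(c - e / 2) * \<mu> s < a s" using As div_band[OF ms] by blast
      have lo2: "\<mu> t \<le> (1 + \<delta>) * \<mu> s" using As ts by blast
      have "(c - e) * \<mu> t \<le> (c - e) * \<mu> t" by simp
      have key: "(c - e) * (1 + \<delta>) \<le> c - e / 2"
      proof -
        have "\<delta> * (c - e) \<le> \<delta> * (c + e)" using \<delta> e by simp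
        then show ?thesis using \<delta> by (simp add: algebra_simps)
      qed
      have "(c - e) * \<mu> t \<le> (c - e / 2) * \<mu> s"
      proof (cases "c - e \<le> 0")
        case True
        then have "(c - e) * \<mu> t \<le> 0" using mt by (simp add: mult_nonpos_nonneg)
        also have "0 \<le> (c - e / 2) * \<mu> s" using False ms by simp
        finally show ?thesis .
      next
        case F2: False
        have "(c - e) * \<mu> t \<le> (c - e) * ((1 + \<delta>) * \<mu> s)"
          using lo2 F2 by (intro mult_left_mono) auto
        also have "\<dots> = ((c - e) * (1 + \<delta>)) * \<mu> s" by simp
        also have "\<dots> \<le> (c - e / 2) * \<mu> s" using key ms by (intro mult_right_mono) auto
        finally show ?thesis .
      qed
      also have "\<dots> < a s" by (fact lo1)
      also have "a s \<le> b t" using As ts by blast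
      finally show ?thesis .
    qed
    show "\<bar>b t / \<mu> t - c\<bar> < e" using div_band[OF mt] upper lower by blast
  qed
qed


lemma sym_open:
  assumes "open (U :: 'g set)"
  shows "open (U \<inter> uminus -` U)"
proof -
  have "open (uminus -` U :: 'g set)"
    by (rule continuous_open_vimage[OF assms]) (intro continuous_intros)
  then show ?thesis using assms by (rule open_Int[rotated])
qed

lemma qu_mono: "0 < s \<Longrightarrow> s \<le> t \<Longrightarrow> Gt s \<subseteq> Gt t"
  using qu by (simp add: quasi_uniform_def)

lemma qu_i: "0 < \<epsilon> \<Longrightarrow> \<exists>U. open U \<and> 0 \<in> U \<and> (\<exists>T. \<forall>t\<ge>T. {u + y | u y. u \<in> U \<and> y \<in> Gt t} \<subseteq> Gt (t + \<epsilon>))"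
  using qu unfolding quasi_uniform_def eventually_at_top_linorder by blast

lemma qu_ii: "0 < \<delta> \<Longrightarrow> \<exists>\<epsilon>>0. \<exists>T. \<forall>t\<ge>T. emeasure m (Gt (t + \<epsilon>)) \<le> (1 + ennreal \<delta>) * emeasure m (Gt t)"
  using qu unfolding quasi_uniform_def eventually_at_top_linorder by blast

lemma shift_bounds:
  fixes F :: "'x \<Rightarrow> real"
  assumes F: "F \<in> borel_measurable M" and \<epsilon>: "0 < \<epsilon>" and t: "0 < t"
    and UG: "{u + y | u y. u \<in> U \<and> y \<in> Gt t} \<subseteq> Gt (t + \<epsilon>)"
    and hU: "h \<in> U" "- h \<in> U"
  shows "nnI m act F (Gt t) (act h y) \<le> nnI m act F (Gt (t + \<epsilon>)) y"
    "nnI m act F (Gt t) y \<le> nnI m act F (Gt (t + \<epsilon>)) (act h y)"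
proof -
  have Bt: "Gt t \<in> sets borel" and Bte: "Gt (t + \<epsilon>) \<in> sets borel"
    using G_props(1) t \<epsilon> by auto
  have i1: "indicator (Gt t) (h + v) \<le> (indicator (Gt (t + \<epsilon>)) v :: ennreal)" for v
  proof (cases "h + v \<in> Gt t")
    case True
    have "v = - h + (h + v)" by (simp add: add.assoc[symmetric])
    then have "v \<in> Gt (t + \<epsilon>)" using UG hU(2) True by blast
    then show ?thesis using True by simp
  qed simp
  have i2: "indicator (Gt t) v \<le> (indicator (Gt (t + \<epsilon>)) (h + v) :: ennreal)" for v
  proof (cases "v \<in> Gt t")
    case True
    then have "h + v \<in> Gt (t + \<epsilon>)" using UG hU(1) by blast
    then show ?thesis using True by simp
  qed simp
  show "nnI m act F (Gt t) (act h y) \<le> nnI m act F (Gt (t + \<epsilon>)) y"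
    unfolding nnI_shift[OF F Bt] unfolding nnI_def
    by (rule nn_integral_mono) (intro mult_right_mono i1, simp)
  show "nnI m act F (Gt t) y \<le> nnI m act F (Gt (t + \<epsilon>)) (act h y)"
    unfolding nnI_shift[OF F Bte] unfolding nnI_def
    by (rule nn_integral_mono) (intro mult_right_mono i2, simp)
qed

lemma fin_all:
  fixes F :: "'x \<Rightarrow> real"
  assumes "\<forall>n. nnI m act F (Gt (Suc n)) y \<noteq> \<infinity>" and t: "0 < t"
  shows "nnI m act F (Gt t) y \<noteq> \<infinity>"
proof -
  define n where "n = nat \<lceil>t\<rceil>"
  have "t \<le> real (Suc n)" unfolding n_def by linarith
  then have "nnI m act F (Gt t) y \<le> nnI m act F (Gt (Suc n)) y"
    by (intro nnI_mono qu_mono t)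
  then show ?thesis using assms(1) by (auto simp: top_unique)
qed

lemma act_inv: "act h (act (- h) x) = x"
  by (simp add: act_add[symmetric] act0)


definition good :: "'g measure \<Rightarrow> (real \<Rightarrow> 'g set) \<Rightarrow> ('g \<Rightarrow> 'x \<Rightarrow> 'x) \<Rightarrow> 'x measure \<Rightarrow> ('x \<Rightarrow> real) \<Rightarrow> 'x \<Rightarrow> bool"
  where "good mm G a MM F y \<longleftrightarrow> ((\<lambda>t. haar_avg mm (G t) a F y) \<longlongrightarrow> (\<integral>z. F z \<partial>MM)) at_top \<and>
     (\<forall>n. nnI mm a F (G (Suc n)) y \<noteq> \<infinity>)"

lemma transfer_fin:
  fixes F :: "'x \<Rightarrow> real"
  assumes F: "F \<in> borel_measurable M" and nn: "\<And>z. 0 \<le> F z"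
    and near: "\<And>V::'g set. open V \<Longrightarrow> 0 \<in> V \<Longrightarrow> \<exists>h\<in>V. good m Gt act M F (act (- h) x)"
    and t: "0 < t"
  shows "nnI m act F (Gt t) x \<noteq> \<infinity>"
proof -
  obtain U T where U: "open U" "0 \<in> U" and UT: "\<And>t. t \<ge> T \<Longrightarrow> {u + y | u y. u \<in> U \<and> y \<in> Gt t} \<subseteq> Gt (t + 1)"
    using qu_i[of 1] by auto
  obtain h where h: "h \<in> U \<inter> uminus -` U" and G: "good m Gt act M F (act (- h) x)"
    using near[OF sym_open[OF U(1)]] U(2) by auto
  define y where "y = act (- h) x"
  have xeq: "act h y = x" unfolding y_def by (rule act_inv)
  define s where "s = max t T"
  have s: "0 < s" "t \<le> s" "T \<le> s" unfolding s_def using t by auto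
  have "nnI m act F (Gt t) x \<le> nnI m act F (Gt s) x"
    by (intro nnI_mono qu_mono t s)
  also have "\<dots> \<le> nnI m act F (Gt (s + 1)) y"
    using shift_bounds(1)[OF F _ s(1) UT[OF s(3)], of h y] h unfolding xeq by simp
  also have "\<dots> < \<infinity>"
    using fin_all[of F y "s + 1"] G s(1) unfolding good_def y_def by (simp add: less_top)
  finally show ?thesis by simp
qed

lemma transfer_lim:
  fixes F :: "'x \<Rightarrow> real"
  assumes F: "F \<in> borel_measurable M" and nn: "\<And>z. 0 \<le> F z"
    and near: "\<And>V::'g set. open V \<Longrightarrow> 0 \<in> V \<Longrightarrow> \<exists>h\<in>V. good m Gt act M F (act (- h) x)"
  shows "((\<lambda>t. haar_avg m (Gt t) act F x) \<longlongrightarrow> (\<integral>z. F z \<partial>M)) at_top"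
proof -
  define c where "c = (\<integral>z. F z \<partial>M)"
  have c: "0 \<le> c" unfolding c_def using nn by simp
  show ?thesis
    unfolding tendsto_iff dist_real_def c_def[symmetric]
  proof (intro allI impI)
    fix e :: real assume e: "0 < e"
    define \<delta> where "\<delta> = e / (2 * (c + e))"
    have ce: "0 < c + e" using c e by simp
    have d1: "0 < \<delta>" unfolding \<delta>_def using ce e by auto
    have d2: "\<delta> * (c + e) = e / 2" unfolding \<delta>_def using ce by (simp add: field_simps)
    have \<delta>: "0 < \<delta>" "\<delta> * (c + e) \<le> e / 2" using d1 d2 by auto
    obtain \<epsilon> T2 where \<epsilon>: "0 < \<epsilon>"
      and T2: "\<And>t. t \<ge> T2 \<Longrightarrow> emeasure m (Gt (t + \<epsilon>)) \<le> (1 + ennreal \<delta>) * emeasure m (Gt t)"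
      using qu_ii[OF \<delta>(1)] by auto
    obtain U T where U: "open U" "0 \<in> U"
      and UT: "\<And>t. t \<ge> T \<Longrightarrow> {u + y | u y. u \<in> U \<and> y \<in> Gt t} \<subseteq> Gt (t + \<epsilon>)"
      using qu_i[OF \<epsilon>] by auto
    obtain h where h: "h \<in> U \<inter> uminus -` U" and G: "good m Gt act M F (act (- h) x)"
      using near[OF sym_open[OF U(1)]] U(2) by auto
    define y where "y = act (- h) x"
    have xeq: "act h y = x" unfolding y_def by (rule act_inv)
    have finx: "\<And>t. 0 < t \<Longrightarrow> nnI m act F (Gt t) x \<noteq> \<infinity>"
      by (rule transfer_fin[OF F nn near]) auto
    have finy: "\<And>t. 0 < t \<Longrightarrow> nnI m act F (Gt t) y \<noteq> \<infinity>"
      using fin_all[of F y] G unfolding good_def y_def by simp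
    have limy: "((\<lambda>t. haar_avg m (Gt t) act F y) \<longlongrightarrow> c) at_top"
      using G unfolding good_def y_def c_def by simp
    define a where "a t = enn2real (nnI m act F (Gt t) y)" for t
    define b where "b t = enn2real (nnI m act F (Gt t) x)" for t
    define \<mu> where "\<mu> t = measure m (Gt t)" for t
    have avg: "\<And>z t. 0 < t \<Longrightarrow> haar_avg m (Gt t) act F z = enn2real (nnI m act F (Gt t) z) / \<mu> t"
      unfolding \<mu>_def using avg_eq[OF F nn G_props(1)] by simp
    have lim: "((\<lambda>t. a t / \<mu> t) \<longlongrightarrow> c) at_top"
    proof -
      have "\<forall>\<^sub>F t in at_top. haar_avg m (Gt t) act F y = a t / \<mu> t"
        using eventually_gt_at_top[of 0] by eventually_elim (simp add: avg a_def)
      from tendsto_cong[OF this] limy show ?thesis by simp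
    qed
    have H1: "\<forall>\<^sub>F t in at_top. b t \<le> a (t + \<epsilon>)"
      unfolding eventually_at_top_linorder
    proof (intro exI[of _ "max T 1"] allI impI)
      fix t assume "max T 1 \<le> t"
      then have t: "0 < t" "T \<le> t" by auto
      have "nnI m act F (Gt t) x \<le> nnI m act F (Gt (t + \<epsilon>)) y"
        using shift_bounds(1)[OF F \<epsilon> t(1) UT[OF t(2)], of h y] h unfolding xeq by simp
      moreover have "nnI m act F (Gt (t + \<epsilon>)) y < \<infinity>" using finy[of "t + \<epsilon>"] t \<epsilon> by (simp add: less_top)
      ultimately show "b t \<le> a (t + \<epsilon>)" unfolding a_def b_def by (metis enn2real_mono infinity_ennreal_def)
    qed
    have H2: "\<forall>\<^sub>F t in at_top. a t \<le> b (t + \<epsilon>)"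
      unfolding eventually_at_top_linorder
    proof (intro exI[of _ "max T 1"] allI impI)
      fix t assume "max T 1 \<le> t"
      then have t: "0 < t" "T \<le> t" by auto
      have "nnI m act F (Gt t) y \<le> nnI m act F (Gt (t + \<epsilon>)) x"
        using shift_bounds(2)[OF F \<epsilon> t(1) UT[OF t(2)], of h y] h unfolding xeq by simp
      moreover have "nnI m act F (Gt (t + \<epsilon>)) x < \<infinity>" using finx[of "t + \<epsilon>"] t \<epsilon> by (simp add: less_top)
      ultimately show "a t \<le> b (t + \<epsilon>)" unfolding a_def b_def by (metis enn2real_mono infinity_ennreal_def)
    qed
    have H3: "\<forall>\<^sub>F t in at_top. \<mu> (t + \<epsilon>) \<le> (1 + \<delta>) * \<mu> t"
      unfolding eventually_at_top_linorder
    proof (intro exI[of _ "max T2 1"] allI impI)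
      fix t assume "max T2 1 \<le> t"
      then have t: "0 < t" "T2 \<le> t" by auto
      have "ennreal (\<mu> (t + \<epsilon>)) \<le> (1 + ennreal \<delta>) * ennreal (\<mu> t)"
        using T2[OF t(2)] G_props(4)[of t] G_props(4)[of "t + \<epsilon>"] t \<epsilon> unfolding \<mu>_def by simp
      also have "(1 + ennreal \<delta>) * ennreal (\<mu> t) = ennreal ((1 + \<delta>) * \<mu> t)"
        using \<delta>(1) G_props(3)[OF t(1)] unfolding \<mu>_def
        using ennreal_plus[of 1 \<delta>] by (simp add: ennreal_mult)
      finally show "\<mu> (t + \<epsilon>) \<le> (1 + \<delta>) * \<mu> t"
        using \<delta>(1) G_props(3)[OF t(1)] unfolding \<mu>_def by (simp add: ennreal_le_iff)
    qed
    have pos: "\<forall>\<^sub>F t in at_top. 0 < \<mu> t"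
      using eventually_gt_at_top[of 0] by eventually_elim (simp add: \<mu>_def G_props(3))
    have anz: "\<And>t. 0 \<le> a t" unfolding a_def by simp
    have "\<forall>\<^sub>F t in at_top. \<bar>b t / \<mu> t - c\<bar> < e"
      by (rule sandwich_real[OF lim c e \<delta> \<epsilon> H1 H2 H3 pos anz])
    then show "\<forall>\<^sub>F t in at_top. \<bar>haar_avg m (Gt t) act F x - c\<bar> < e"
    proof (rule eventually_mono[OF eventually_conj[OF _ eventually_gt_at_top[of 0]]])
      fix t assume A: "\<bar>b t / \<mu> t - c\<bar> < e \<and> 0 < t"
      have "haar_avg m (Gt t) act F x = b t / \<mu> t"
        by (simp only: b_def avg[OF conjunct2[OF A]])
      then show "\<bar>haar_avg m (Gt t) act F x - c\<bar> < e" using A by simp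
    qed
  qed
qed


lemma memLp_mono:
  fixes f g :: "'x \<Rightarrow> real"
  assumes f: "memLp M p f" and g: "g \<in> borel_measurable M" and le: "\<And>z. \<bar>g z\<bar> \<le> \<bar>f z\<bar>"
  shows "memLp M p g"
proof (cases "p = \<infinity>")
  case True
  then obtain C where "AE x in M. \<bar>f x\<bar> \<le> C" using f by (auto simp: memLp_def)
  then have "AE x in M. \<bar>g x\<bar> \<le> C" by (rule eventually_mono) (use le order_trans in blast)
  then show ?thesis using True g by (auto simp: memLp_def)
next
  case False
  have fin: "(\<integral>\<^sup>+ x. ennreal (\<bar>f x\<bar> powr enn2real p) \<partial>M) < \<infinity>" using f False by (simp add: memLp_def)
  have "(\<integral>\<^sup>+ x. ennreal (\<bar>g x\<bar> powr enn2real p) \<partial>M) \<le> (\<integral>\<^sup>+ x. ennreal (\<bar>f x\<bar> powr enn2real p) \<partial>M)"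
    by (intro nn_integral_mono ennreal_leI powr_mono2 le) auto
  then have "(\<integral>\<^sup>+ x. ennreal (\<bar>g x\<bar> powr enn2real p) \<partial>M) < \<infinity>" using fin by (rule le_less_trans)
  then show ?thesis using False g by (simp add: memLp_def)
qed

lemma memLp_integrable:
  fixes f :: "'x \<Rightarrow> real"
  assumes f: "memLp M p f"
  shows "integrable M f"
proof -
  interpret Pr: prob_space M by (rule prob)
  have fm: "f \<in> borel_measurable M" using f by (simp add: memLp_def)
  show ?thesis
  proof (cases "p = \<infinity>")
    case True
    then obtain C where "AE x in M. \<bar>f x\<bar> \<le> C" using f by (auto simp: memLp_def)
    then show ?thesis using Pr.integrable_const_bound[of f C] fm by simp
  next
    case False
    define r where "r = enn2real p"
    have r1: "1 \<le> r"
    proof -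
      have "enn2real 1 \<le> enn2real p" using p False by (intro enn2real_mono) (auto simp: less_top)
      then show ?thesis unfolding r_def by simp
    qed
    have fin: "(\<integral>\<^sup>+ x. ennreal (\<bar>f x\<bar> powr r) \<partial>M) < \<infinity>" using f False by (simp add: memLp_def r_def)
    have pw: "\<bar>y\<bar> \<le> 1 + \<bar>y\<bar> powr r" for y :: real
    proof (cases "\<bar>y\<bar> \<le> 1")
      case True then show ?thesis by (smt (verit) powr_ge_zero)
    next
      case False
      then have "\<bar>y\<bar> powr 1 \<le> \<bar>y\<bar> powr r" using r1 by (intro powr_mono) auto
      then show ?thesis using False by simp
    qed
    have m2: "(\<lambda>x. ennreal (\<bar>f x\<bar> powr r)) \<in> borel_measurable M"
      using fm by measurable
    have "(\<integral>\<^sup>+ x. ennreal (norm (f x)) \<partial>M) \<le> (\<integral>\<^sup>+ x. 1 + ennreal (\<bar>f x\<bar> powr r) \<partial>M)"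
    proof (rule nn_integral_mono)
      fix x
      have "ennreal (norm (f x)) \<le> ennreal (1 + \<bar>f x\<bar> powr r)" using pw[of "f x"] by (intro ennreal_leI) simp
      also have "\<dots> = 1 + ennreal (\<bar>f x\<bar> powr r)" by (simp add: ennreal_plus)
      finally show "ennreal (norm (f x)) \<le> 1 + ennreal (\<bar>f x\<bar> powr r)" .
    qed
    also have "\<dots> = (\<integral>\<^sup>+ x. 1 \<partial>M) + (\<integral>\<^sup>+ x. ennreal (\<bar>f x\<bar> powr r) \<partial>M)"
      by (rule nn_integral_add) (use m2 in auto)
    also have "\<dots> < \<infinity>"
    proof -
      have "emeasure M UNIV = 1" using Pr.emeasure_space_1 by simp
      then show ?thesis using fin by simp
    qed
    finally show ?thesis by (intro integrableI_bounded fm)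
  qed
qed


lemma set_integrable_nn:
  fixes F :: "'x \<Rightarrow> real"
  assumes F: "F \<in> borel_measurable M" and nn: "\<And>z. 0 \<le> F z" and t: "0 < t"
    and fin: "nnI m act F (Gt t) x \<noteq> \<infinity>"
  shows "set_integrable m (Gt t) (\<lambda>u. F (act (- u) x))"
  unfolding set_integrable_def
proof (rule integrableI_bounded[OF meas_integrand_real[OF F G_props(1)[OF t]]])
  have "(\<integral>\<^sup>+ u. ennreal (norm (indicator (Gt t) u *\<^sub>R F (act (- u) x))) \<partial>m) = nnI m act F (Gt t) x"
    unfolding nnI_def by (rule nn_integral_cong) (simp add: indicator_def nn)
  then show "(\<integral>\<^sup>+ u. ennreal (norm (indicator (Gt t) u *\<^sub>R F (act (- u) x))) \<partial>m) < \<infinity>"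
    using fin by (simp add: less_top)
qed

lemma main:
  fixes f :: "'x \<Rightarrow> real"
  assumes f: "memLp M p f"
  shows "\<exists>\<Omega>\<in>sets M. emeasure M \<Omega> = 1 \<and> (\<forall>g x. act g x \<in> \<Omega> \<longleftrightarrow> x \<in> \<Omega>) \<and>
     (\<forall>x\<in>\<Omega>. ((\<lambda>t. haar_avg m (Gt t) act f x) \<longlongrightarrow> (\<integral>y. f y \<partial>M)) at_top)"
proof -
  have fm: "f \<in> borel_measurable M" using f by (simp add: memLp_def)
  have fi: "integrable M f" by (rule memLp_integrable[OF f])
  define fp where "fp z = max (f z) 0" for z
  define fn where "fn z = max (- f z) 0" for z
  have fpm: "fp \<in> borel_measurable M" unfolding fp_def using fm by measurable
  have fnm: "fn \<in> borel_measurable M" unfolding fn_def using fm by measurable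
  have fpn: "\<And>z. 0 \<le> fp z" and fnn: "\<And>z. 0 \<le> fn z" by (simp_all add: fp_def fn_def)
  have fpi: "integrable M fp" unfolding fp_def by (rule integrable_max[OF fi integrable_zero])
  have fni: "integrable M fn" unfolding fn_def by (rule integrable_max[OF integrable_minus[OF fi] integrable_zero])
  have fpL: "memLp M p fp" by (rule memLp_mono[OF f fpm]) (simp add: fp_def)
  have fnL: "memLp M p fn" by (rule memLp_mono[OF f fnm]) (simp add: fn_def)
  have fsplit: "\<And>z. f z = fp z - fn z" by (simp add: fp_def fn_def max_def)
  have fpE: "AE y in M. ((\<lambda>t. haar_avg m (Gt t) act fp y) \<longlongrightarrow> (\<integral>z. fp z \<partial>M)) at_top"
    using pet fpL unfolding pointwise_ergodic_def by blast
  have fnE: "AE y in M. ((\<lambda>t. haar_avg m (Gt t) act fn y) \<longlongrightarrow> (\<integral>z. fn z \<partial>M)) at_top"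
    using pet fnL unfolding pointwise_ergodic_def by blast
  have fpF: "AE y in M. \<forall>n. nnI m act fp (Gt (Suc n)) y \<noteq> \<infinity>"
    unfolding AE_all_countable
    by (intro allI fin_AE[OF fpm fpn fpi] G_props) simp_all
  have fnF: "AE y in M. \<forall>n. nnI m act fn (Gt (Suc n)) y \<noteq> \<infinity>"
    unfolding AE_all_countable
    by (intro allI fin_AE[OF fnm fnn fni] G_props) simp_all
  have "AE y in M. good m Gt act M fp y \<and> good m Gt act M fn y"
    using fpE fpF fnE fnF by eventually_elim (unfold good_def, intro conjI, assumption+)
  then obtain N where N: "{y \<in> space M. \<not> (good m Gt act M fp y \<and> good m Gt act M fn y)} \<subseteq> N"
    "emeasure M N = 0" "N \<in> sets M"
    by (rule AE_E)
  from omega_exists[OF N(3) N(2)] obtain \<Omega> where \<Omega>: "\<Omega> \<in> sets M" "emeasure M \<Omega> = 1" "\<forall>g x. act g x \<in> \<Omega> \<longleftrightarrow> x \<in> \<Omega>"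
    and near: "\<forall>x\<in>\<Omega>. \<forall>V::'g set. open V \<and> 0 \<in> V \<longrightarrow> (\<exists>h\<in>V. act (- h) x \<notin> N)"
    by (elim bexE conjE) (rule that)
  have goodN: "good m Gt act M fp y \<and> good m Gt act M fn y" if "y \<notin> N" for y
  proof (rule ccontr)
    assume "\<not> ?thesis"
    then have "y \<in> {y \<in> space M. \<not> (good m Gt act M fp y \<and> good m Gt act M fn y)}" by simp
    then show False using N(1) that by blast
  qed
  have conv: "((\<lambda>t. haar_avg m (Gt t) act f x) \<longlongrightarrow> (\<integral>y. f y \<partial>M)) at_top" if x: "x \<in> \<Omega>" for x
  proof -
    have nearp: "\<exists>h\<in>V. good m Gt act M fp (act (- h) x)" if "open V" "0 \<in> V" for V :: "'g set"
    proof -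
      have "open V \<and> 0 \<in> V" using that by simp
      from near[rule_format, OF x this] obtain h where h: "h \<in> V" "act (- h) x \<notin> N" by (rule bexE)
      show ?thesis using h(1) goodN[OF h(2)] by (intro bexI[of _ h]) simp_all
    qed
    have nearn: "\<exists>h\<in>V. good m Gt act M fn (act (- h) x)" if "open V" "0 \<in> V" for V :: "'g set"
    proof -
      have "open V \<and> 0 \<in> V" using that by simp
      from near[rule_format, OF x this] obtain h where h: "h \<in> V" "act (- h) x \<notin> N" by (rule bexE)
      show ?thesis using h(1) goodN[OF h(2)] by (intro bexI[of _ h]) simp_all
    qed
    have Lp: "((\<lambda>t. haar_avg m (Gt t) act fp x) \<longlongrightarrow> (\<integral>z. fp z \<partial>M)) at_top"
      by (rule transfer_lim[OF fpm fpn nearp])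
    have Ln: "((\<lambda>t. haar_avg m (Gt t) act fn x) \<longlongrightarrow> (\<integral>z. fn z \<partial>M)) at_top"
      by (rule transfer_lim[OF fnm fnn nearn])
    have intf: "(\<integral>y. f y \<partial>M) = (\<integral>z. fp z \<partial>M) - (\<integral>z. fn z \<partial>M)"
      using Bochner_Integration.integral_diff[OF fpi fni] fsplit by simp
    have dec: "haar_avg m (Gt t) act f x = haar_avg m (Gt t) act fp x - haar_avg m (Gt t) act fn x"
      if t: "0 < t" for t
    proof -
      have ip: "set_integrable m (Gt t) (\<lambda>u. fp (act (- u) x))"
        by (rule set_integrable_nn[OF fpm fpn t transfer_fin[OF fpm fpn nearp t]])
      have in': "set_integrable m (Gt t) (\<lambda>u. fn (act (- u) x))"
        by (rule set_integrable_nn[OF fnm fnn t transfer_fin[OF fnm fnn nearn t]])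
      have "(LINT u:Gt t|m. f (act (- u) x)) = (LINT u:Gt t|m. fp (act (- u) x) - fn (act (- u) x))"
        by (simp add: fsplit[symmetric])
      also have "\<dots> = (LINT u:Gt t|m. fp (act (- u) x)) - (LINT u:Gt t|m. fn (act (- u) x))"
        by (rule set_integral_diff(2)[OF ip in'])
      finally show ?thesis by (simp add: haar_avg_def right_diff_distrib)
    qed
    have "((\<lambda>t. haar_avg m (Gt t) act fp x - haar_avg m (Gt t) act fn x) \<longlongrightarrow> (\<integral>y. f y \<partial>M)) at_top"
      unfolding intf by (rule tendsto_diff[OF Lp Ln])
    moreover have ev: "\<forall>\<^sub>F t in at_top. haar_avg m (Gt t) act fp x - haar_avg m (Gt t) act fn x = haar_avg m (Gt t) act f x"
      using eventually_gt_at_top[of 0] by (rule eventually_mono) (simp add: dec)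
    ultimately show ?thesis using tendsto_cong[OF ev] by simp
  qed
  show ?thesis
    by (rule bexI[of _ \<Omega>]) (use \<Omega> conv in simp_all)
qed

end

theorem theorem5p22:
  fixes m :: "('g::{topological_group_add, second_countable_topology, t2_space}) measure"
    and M :: "('x::polish_space) measure"
    and act :: "'g \<Rightarrow> 'x \<Rightarrow> 'x"
    and Gt :: "real \<Rightarrow> 'g set"
    and p :: ennreal
  assumes lc: "locally_compact_space (euclidean :: 'g topology)"
    and haar: "left_haar_measure m"
    and prob: "prob_space M"
    and sets_M: "sets M = sets borel"
    and action: "mp_action act M"
    and p: "1 \<le> p"
    and qu: "quasi_uniform m Gt"
    and pet: "pointwise_ergodic m Gt act M p"
  shows "\<forall>f. memLp M p f \<longrightarrow>
           (\<exists>\<Omega> \<in> sets M. emeasure M \<Omega> = 1 \<and>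
              (\<forall>g x. act g x \<in> \<Omega> \<longleftrightarrow> x \<in> \<Omega>) \<and>
              (\<forall>x \<in> \<Omega>. ((\<lambda>t. haar_avg m (Gt t) act f x) \<longlongrightarrow> (\<integral>y. f y \<partial>M)) at_top))"
  using main[OF lc haar prob sets_M action p qu pet] by blast

end
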